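(* Let $\xi\in\mathbb{S}^{N-1}$ and $\xi^\perp=I-\xi\otimes\xi$. (i) For $v\in\mathbb{R}^N$: $\xi\vee v\le0$ if and only if ($v=(\xi^\top v)\xi$ and $\xi^\top v\le0$), if and only if ($\xi^\perp v=0$ and $\xi^\top v\le0$), if and only if $v=-|v|\xi$. (ii) For $\mathbf{X}\in\mathbb{R}^N\otimes\mathbb{R}^{n\times n}_s$: $\xi\vee\mathbf{X}\le_\otimes0$ if and only if ($\mathbf{X}=\xi\otimes(\xi^\top\mathbf{X})$ and $\xi^\top\mathbf{X}\le0$), if and only if ($\xi^\perp\mathbf{X}=0$ and $\xi^\top\mathbf{X}\le0$), if and only if $\xi\vee\mathbf{X}\le0$. In particular, for every $\eta\in\mathbb{R}^N$ and $\mathbf{Y}\in\mathbb{R}^N\otimes\mathbb{R}^{n\times n}_s$, $\eta\vee\mathbf{Y}\le_\otimes0$ if and only if $\eta\vee\mathbf{Y}\le0$.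
   Context: Summation over repeated indices. For $a,b\in\mathbb{R}^N$, $a\vee b:=\frac12(a\otimes b+b\otimes a)\in\mathbb{R}^{N\times N}_s$, with inequalities of symmetric matrices in the sense of quadratic forms. $\mathbb{R}^N\otimes\mathbb{R}^{n\times n}_s$: arrays $\mathbf{X}=(\mathbf{X}_{\alpha ij})$ symmetric in $i,j$. $\xi^\top\mathbf{X}:=(\xi_\alpha\mathbf{X}_{\alpha ij})\in\mathbb{R}^{n\times n}_s$ (with $\le0$ meaning negative semidefinite), $\xi^\perp\mathbf{X}:=((\xi^\perp)_{\alpha\beta}\mathbf{X}_{\beta ij})$, $\xi\otimes A:=(\xi_\alpha A_{ij})$. $\xi\vee\mathbf{X}$ is the fourth-order tensor with components $\frac12(\xi_\alpha\mathbf{X}_{\beta ij}+\xi_\beta\mathbf{X}_{\alpha ij})$ indexed by $(\alpha i,\beta j)$. For a fourth-order tensor $\Xi$: $\Xi\le0$ means $\Xi_{\alpha i\beta j}P_{\alpha i}P_{\beta j}\le0$ for all $P\in\mathbb{R}^{N\times n}$; $\Xi\le_\otimes0$ means $\Xi_{\alpha i\beta j}\eta_\alpha w_i\eta_\beta w_j\le0$ for all $\eta\in\mathbb{R}^N,w\in\mathbb{R}^n$. *)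

theory Defs
  imports "HOL-Analysis.Analysis"
begin

text \<open>Vectors in R^N are real^'N; arrays X in R^N (x) R^{n x n}_s are real^'n^'n^'N,
  with components X $ alpha $ i $ j. Fourth-order tensors indexed by (alpha i, beta j)
  are functions 'N => 'n => 'N => 'n => real.\<close>

definition vee :: "real^'N \<Rightarrow> real^'N \<Rightarrow> real^'N^'N" where
  "vee a b = (\<chi> k l. (a$k * b$l + b$k * a$l) / 2)"

definition mat_nonpos :: "real^'m^'m \<Rightarrow> bool" where
  "mat_nonpos A \<longleftrightarrow> (\<forall>x. x \<bullet> (A *v x) \<le> 0)"

definition xi_perp_mat :: "real^'N \<Rightarrow> real^'N^'N" where
  "xi_perp_mat xi = mat 1 - (\<chi> a b. xi$a * xi$b)"

definition sym_array :: "real^'n^'n^'N \<Rightarrow> bool" where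
  "sym_array X \<longleftrightarrow> (\<forall>a i j. X$a$i$j = X$a$j$i)"

definition xi_top :: "real^'N \<Rightarrow> real^'n^'n^'N \<Rightarrow> real^'n^'n" where
  "xi_top xi X = (\<chi> i j. \<Sum>a\<in>UNIV. xi$a * X$a$i$j)"

definition xi_perp_arr :: "real^'N \<Rightarrow> real^'n^'n^'N \<Rightarrow> real^'n^'n^'N" where
  "xi_perp_arr xi X = (\<chi> a i j. \<Sum>b\<in>UNIV. xi_perp_mat xi $a$b * X$b$i$j)"

definition otimes_vm :: "real^'N \<Rightarrow> real^'n^'n \<Rightarrow> real^'n^'n^'N" where
  "otimes_vm xi A = (\<chi> a i j. xi$a * A$i$j)"

definition vee4 :: "real^'N \<Rightarrow> real^'n^'n^'N \<Rightarrow> 'N \<Rightarrow> 'n \<Rightarrow> 'N \<Rightarrow> 'n \<Rightarrow> real" where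
  "vee4 xi X a i b j = (xi$a * X$b$i$j + xi$b * X$a$i$j) / 2"

definition tensor_nonpos :: "('N::finite \<Rightarrow> 'n::finite \<Rightarrow> 'N \<Rightarrow> 'n \<Rightarrow> real) \<Rightarrow> bool" where
  "tensor_nonpos T \<longleftrightarrow> (\<forall>P :: real^'n^'N.
     (\<Sum>a\<in>UNIV. \<Sum>i\<in>UNIV. \<Sum>b\<in>UNIV. \<Sum>j\<in>UNIV. T a i b j * P$a$i * P$b$j) \<le> 0)"

definition tensor_nonpos_otimes :: "('N::finite \<Rightarrow> 'n::finite \<Rightarrow> 'N \<Rightarrow> 'n \<Rightarrow> real) \<Rightarrow> bool" where
  "tensor_nonpos_otimes T \<longleftrightarrow> (\<forall>(eta :: real^'N) (w :: real^'n).
     (\<Sum>a\<in>UNIV. \<Sum>i\<in>UNIV. \<Sum>b\<in>UNIV. \<Sum>j\<in>UNIV.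
        T a i b j * eta$a * w$i * eta$b * w$j) \<le> 0)"

end

theory Submission imports Defs begin

lemma quad_vee: "x \<bullet> (vee a b *v x) = (a \<bullet> x) * (b \<bullet> x)"
proof -
  have "x \<bullet> (vee a b *v x) = (\<Sum>k\<in>UNIV. \<Sum>l\<in>UNIV. x$k * (((a$k*b$l + b$k*a$l)/2) * x$l))"
    by (simp add: vee_def matrix_vector_mult_def inner_vec_def sum_distrib_left)
  also have "\<dots> = (\<Sum>k\<in>UNIV. \<Sum>l\<in>UNIV. (a$k*x$k)*(b$l*x$l)/2 + (b$k*x$k)*(a$l*x$l)/2)"
    by (intro sum.cong refl) (simp add: field_simps)
  also have "\<dots> = ((\<Sum>k\<in>UNIV. a$k*x$k)*(\<Sum>l\<in>UNIV. b$l*x$l))/2 + ((\<Sum>k\<in>UNIV. b$k*x$k)*(\<Sum>l\<in>UNIV. a$l*x$l))/2"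
    by (simp add: add_divide_distrib sum.distrib sum_divide_distrib sum_product)
  also have "\<dots> = (a \<bullet> x) * (b \<bullet> x)"
    by (simp add: inner_vec_def mult.commute)
  finally show ?thesis .
qed

definition bil :: "real^'n^'n \<Rightarrow> real^'n \<Rightarrow> real^'n \<Rightarrow> real" where
  "bil B x y = (\<Sum>i\<in>UNIV. \<Sum>j\<in>UNIV. x$i * B$i$j * y$j)"

lemma bil_add: "bil B (x+y) (x+y) = bil B x x + bil B y y + bil B x y + bil B y x"
  by (simp add: bil_def algebra_simps sum.distrib)

lemma bil_sym: assumes "\<And>i j. B$i$j = B$j$i" shows "bil B y x = bil B x y"
  unfolding bil_def using assms by (subst sum.swap) (simp add: algebra_simps)

lemma sum_delta_r: "(\<Sum>l\<in>(UNIV::'a::finite set). (f l::real) * (if l = j then 1 else 0)) = f j"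
proof -
  have "(\<Sum>l\<in>(UNIV::'a set). (f l::real) * (if l = j then 1 else 0)) = (\<Sum>l\<in>UNIV. if l = j then f l else 0)"
    by (intro sum.cong) auto
  then show ?thesis by simp
qed

lemma bil_axis: "bil B (axis i 1) (axis j 1) = B$i$j"
proof -
  have "bil B (axis i 1) (axis j 1) = (\<Sum>k\<in>UNIV. (\<Sum>l\<in>UNIV. B$k$l * (if l = j then 1 else 0)) * (if k = i then 1 else 0))"
    unfolding bil_def axis_def by (simp add: sum_distrib_left algebra_simps)
  also have "\<dots> = B$i$j" by (simp only: sum_delta_r)
  finally show ?thesis .
qed
lemma polar: assumes "\<And>i j. B$i$j = B$j$i" "\<And>w. bil B w w = 0" shows "B = 0"
proof -
  have "bil B x y = 0" for x y
    using bil_add[of B x y] bil_sym[OF assms(1), of x y] assms(2)[of x] assms(2)[of y] assms(2)[of "x+y"] by simp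
  then show ?thesis using bil_axis[of B] by (simp add: vec_eq_iff)
qed


lemma part1:
  fixes xi v :: "real^'N"
  assumes n: "norm xi = 1"
  shows "mat_nonpos (vee xi v) \<longleftrightarrow> (v = (xi \<bullet> v) *\<^sub>R xi \<and> xi \<bullet> v \<le> 0)"
proof
  assume "mat_nonpos (vee xi v)"
  then have H: "\<And>x. (xi \<bullet> x) * (v \<bullet> x) \<le> 0" by (simp add: mat_nonpos_def quad_vee)
  have xx: "xi \<bullet> xi = 1" using n by (simp add: norm_eq_1)
  have c: "xi \<bullet> v \<le> 0" using H[of xi] xx by (simp add: inner_commute)
  define c where "c = xi \<bullet> v"
  define w where "w = v - c *\<^sub>R xi"
  have xw: "xi \<bullet> w = 0" by (simp add: w_def c_def inner_diff_right xx)
  have "v = w + c *\<^sub>R xi" by (simp add: w_def)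
  then have "v \<bullet> w = w \<bullet> w + c * (xi \<bullet> w)" by (metis inner_add_left inner_scaleR_left)
  then have vw: "v \<bullet> w = w \<bullet> w" using xw by simp
  have "w \<bullet> w = 0"
  proof (rule ccontr)
    assume ne: "w \<bullet> w \<noteq> 0"
    then have pos: "w \<bullet> w > 0" using inner_ge_zero[of w] by linarith
    define t where "t = (1 - c) / (w \<bullet> w)"
    have "(xi \<bullet> (xi + t *\<^sub>R w)) * (v \<bullet> (xi + t *\<^sub>R w)) = c + t * (w \<bullet> w)"
      using xw by (simp add: inner_add_right xx vw c_def inner_commute[of w xi] inner_commute[of v xi])
    also have "\<dots> = 1" using pos by (simp add: t_def)
    finally show False using H[of "xi + t *\<^sub>R w"] by simp
  qed
  then have "w = 0" by simp
  then show "v = (xi \<bullet> v) *\<^sub>R xi \<and> xi \<bullet> v \<le> 0" using c by (simp add: w_def c_def)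
next
  assume A: "v = (xi \<bullet> v) *\<^sub>R xi \<and> xi \<bullet> v \<le> 0"
  show "mat_nonpos (vee xi v)"
    unfolding mat_nonpos_def quad_vee
  proof
    fix x
    have "v \<bullet> x = (xi \<bullet> v) * (xi \<bullet> x)" using A by (metis inner_scaleR_left)
    then show "xi \<bullet> x * (v \<bullet> x) \<le> 0" using A
      by (simp add: mult_nonpos_nonneg mult.left_commute[of "xi \<bullet> x"] flip: power2_eq_square)
  qed
qed

lemma perp_mat_apply: "xi_perp_mat xi *v v = v - (xi \<bullet> v) *\<^sub>R xi"
proof -
  have "(\<chi> a b. xi$a * xi$b) *v v = (xi \<bullet> v) *\<^sub>R xi"
    by (simp add: vec_eq_iff matrix_vector_mult_def inner_vec_def sum_distrib_left sum_distrib_right algebra_simps)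
  then show ?thesis by (simp add: xi_perp_mat_def matrix_vector_mult_diff_rdistrib)
qed

lemma perp_mat_entry: "xi_perp_mat xi $ a $ b = (if a = b then 1 else 0) - xi$a*xi$b"
  by (simp add: xi_perp_mat_def mat_def)

lemma perp_arr_apply: "xi_perp_arr xi X = X - otimes_vm xi (xi_top xi X)"
proof -
  have "(\<Sum>b\<in>UNIV. xi_perp_mat xi $a$b * X$b$i$j) = X$a$i$j - xi$a * (\<Sum>b\<in>UNIV. xi$b * X$b$i$j)" for a i j
  proof -
    have "(\<Sum>b\<in>UNIV. xi_perp_mat xi $a$b * X$b$i$j) = (\<Sum>b\<in>UNIV. (if a = b then X$b$i$j else 0) - xi$a * (xi$b * X$b$i$j))"
      by (intro sum.cong refl) (simp add: perp_mat_entry algebra_simps)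
    also have "\<dots> = X$a$i$j - xi$a * (\<Sum>b\<in>UNIV. xi$b * X$b$i$j)"
      by (simp add: sum_subtractf sum_distrib_left)
    finally show ?thesis .
  qed
  then show ?thesis by (simp add: vec_eq_iff xi_perp_arr_def otimes_vm_def xi_top_def)
qed


definition qv :: "real^'n^'n^'N \<Rightarrow> real^'n \<Rightarrow> real^'N" where
  "qv X w = (\<chi> b. bil (X$b) w w)"

lemma swap_mid: "(\<Sum>a\<in>(UNIV::'a::finite set). \<Sum>i\<in>(UNIV::'b::finite set). \<Sum>b\<in>(UNIV::'c::finite set). f a i b)
   = (\<Sum>a\<in>UNIV. \<Sum>b\<in>UNIV. \<Sum>i\<in>UNIV. f a i b)"
  by (intro sum.cong refl sum.swap)

lemma otimes_sum:
  "(\<Sum>a\<in>UNIV. \<Sum>i\<in>UNIV. \<Sum>b\<in>UNIV. \<Sum>j\<in>UNIV. vee4 xi X a i b j * eta$a * w$i * eta$b * w$j)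
   = (xi \<bullet> eta) * (eta \<bullet> qv X w)"
proof -
  have pt: "(\<Sum>i\<in>UNIV. \<Sum>j\<in>UNIV. vee4 xi X a i b j * eta$a * w$i * eta$b * w$j)
     = ((xi$a*eta$a) * (eta$b * bil (X$b) w w) + (xi$b*eta$b) * (eta$a * bil (X$a) w w)) / 2" for a b
  proof -
    have "((xi$a*eta$a) * (eta$b * bil (X$b) w w) + (xi$b*eta$b) * (eta$a * bil (X$a) w w)) / 2
       = (\<Sum>i\<in>UNIV. \<Sum>j\<in>UNIV. ((xi$a*eta$a) * (eta$b * (w$i * X$b$i$j * w$j)) + (xi$b*eta$b) * (eta$a * (w$i * X$a$i$j * w$j))) / 2)"
      by (simp add: bil_def sum_distrib_left sum.distrib[symmetric] sum_divide_distrib[symmetric] add_divide_distrib[symmetric])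
    also have "\<dots> = (\<Sum>i\<in>UNIV. \<Sum>j\<in>UNIV. vee4 xi X a i b j * eta$a * w$i * eta$b * w$j)"
      by (intro sum.cong refl) (simp add: vee4_def field_simps)
    finally show ?thesis by simp
  qed
  have "(\<Sum>a\<in>UNIV. \<Sum>i\<in>UNIV. \<Sum>b\<in>UNIV. \<Sum>j\<in>UNIV. vee4 xi X a i b j * eta$a * w$i * eta$b * w$j)
     = (\<Sum>a\<in>UNIV. \<Sum>b\<in>UNIV. ((xi$a*eta$a) * (eta$b * bil (X$b) w w) + (xi$b*eta$b) * (eta$a * bil (X$a) w w)) / 2)"
    by (subst swap_mid) (simp add: pt)
  also have "\<dots> = ((\<Sum>a\<in>UNIV. xi$a*eta$a) * (\<Sum>b\<in>UNIV. eta$b * bil (X$b) w w)) / 2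
        + (\<Sum>a\<in>UNIV. \<Sum>b\<in>UNIV. (xi$b*eta$b) * (eta$a * bil (X$a) w w)) / 2"
    by (simp add: add_divide_distrib sum.distrib sum_divide_distrib sum_product)
  also have "(\<Sum>a\<in>UNIV. \<Sum>b\<in>UNIV. (xi$b*eta$b) * (eta$a * bil (X$a) w w))
      = (\<Sum>b\<in>UNIV. xi$b*eta$b) * (\<Sum>a\<in>UNIV. eta$a * bil (X$a) w w)"
    by (subst sum.swap) (simp add: sum_product)
  finally show ?thesis by (simp add: inner_vec_def qv_def)
qed

lemma bil_top: "bil (xi_top xi X) w w = xi \<bullet> qv X w"
proof -
  have "bil (xi_top xi X) w w = (\<Sum>i\<in>UNIV. \<Sum>b\<in>UNIV. \<Sum>j\<in>UNIV. xi$b * (w$i * X$b$i$j * w$j))"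
    unfolding bil_def xi_top_def
    by (subst swap_mid) (simp add: sum_distrib_left sum_distrib_right algebra_simps)
  also have "\<dots> = (\<Sum>b\<in>UNIV. \<Sum>i\<in>UNIV. \<Sum>j\<in>UNIV. xi$b * (w$i * X$b$i$j * w$j))"
    by (rule sum.swap)
  also have "\<dots> = xi \<bullet> qv X w"
    by (simp add: inner_vec_def qv_def bil_def sum_distrib_left)
  finally show ?thesis .
qed

lemma bil_mat: "x \<bullet> (A *v x) = bil A x x"
  by (simp add: bil_def inner_vec_def matrix_vector_mult_def sum_distrib_left algebra_simps)

lemma tensor_sum_otimes:
  "(\<Sum>a\<in>UNIV. \<Sum>i\<in>UNIV. \<Sum>b\<in>UNIV. \<Sum>j\<in>UNIV. vee4 xi (otimes_vm xi A) a i b j * P$a$i * P$b$j)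
   = bil A (\<chi> i. \<Sum>a\<in>UNIV. xi$a * P$a$i) (\<chi> i. \<Sum>a\<in>UNIV. xi$a * P$a$i)"
proof -
  define p where "p = (\<chi> i. \<Sum>a\<in>UNIV. xi$a * P$a$i)"
  have s1: "(\<Sum>b\<in>UNIV. \<Sum>j\<in>UNIV. vee4 xi (otimes_vm xi A) a i b j * P$a$i * P$b$j)
      = (xi$a * P$a$i) * (\<Sum>j\<in>UNIV. A$i$j * p$j)" for a i
  proof -
    have "(\<Sum>b\<in>UNIV. \<Sum>j\<in>UNIV. vee4 xi (otimes_vm xi A) a i b j * P$a$i * P$b$j)
       = (\<Sum>b\<in>UNIV. \<Sum>j\<in>UNIV. (xi$a * P$a$i) * (A$i$j * (xi$b * P$b$j)))"
      by (intro sum.cong refl) (simp add: vee4_def otimes_vm_def field_simps)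
    also have "\<dots> = (\<Sum>j\<in>UNIV. \<Sum>b\<in>UNIV. (xi$a * P$a$i) * (A$i$j * (xi$b * P$b$j)))"
      by (rule sum.swap)
    also have "\<dots> = (xi$a * P$a$i) * (\<Sum>j\<in>UNIV. A$i$j * p$j)"
      by (simp add: p_def sum_distrib_left)
    finally show ?thesis .
  qed
  have "(\<Sum>a\<in>UNIV. \<Sum>i\<in>UNIV. \<Sum>b\<in>UNIV. \<Sum>j\<in>UNIV. vee4 xi (otimes_vm xi A) a i b j * P$a$i * P$b$j)
     = (\<Sum>a\<in>UNIV. \<Sum>i\<in>UNIV. (xi$a * P$a$i) * (\<Sum>j\<in>UNIV. A$i$j * p$j))"
    by (simp add: s1)
  also have "\<dots> = (\<Sum>i\<in>UNIV. \<Sum>a\<in>UNIV. (xi$a * P$a$i) * (\<Sum>j\<in>UNIV. A$i$j * p$j))"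
    by (rule sum.swap)
  also have "\<dots> = (\<Sum>i\<in>UNIV. (\<Sum>a\<in>UNIV. xi$a * P$a$i) * (\<Sum>j\<in>UNIV. A$i$j * p$j))"
    by (simp add: sum_distrib_right)
  also have "\<dots> = (\<Sum>i\<in>UNIV. p$i * (\<Sum>j\<in>UNIV. A$i$j * p$j))"
    by (simp add: p_def)
  also have "\<dots> = bil A p p"
    by (simp add: bil_def sum_distrib_left mult.assoc)
  finally show ?thesis by (simp add: p_def)
qed


lemma bil_diff: "bil (B - C) x y = bil B x y - bil C x y"
  by (simp add: bil_def algebra_simps sum_subtractf)

lemma bil_scale: "bil (c *\<^sub>R B) x y = c * bil B x y"
  by (simp add: bil_def sum_distrib_left algebra_simps)

lemma O_imp_E1:
  fixes xi :: "real^'N" and X :: "real^'n^'n^'N"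
  assumes n: "norm xi = 1" and sym: "sym_array X" and O: "tensor_nonpos_otimes (vee4 xi X)"
  shows "X = otimes_vm xi (xi_top xi X) \<and> mat_nonpos (xi_top xi X)"
proof -
  define A where "A = xi_top xi X"
  have key: "qv X w = (xi \<bullet> qv X w) *\<^sub>R xi \<and> xi \<bullet> qv X w \<le> 0" for w
  proof -
    have "mat_nonpos (vee xi (qv X w))"
      unfolding mat_nonpos_def quad_vee
    proof
      fix eta
      show "xi \<bullet> eta * (qv X w \<bullet> eta) \<le> 0"
        using O[unfolded tensor_nonpos_otimes_def, rule_format, of eta w] otimes_sum[of xi X eta w]
        by (simp add: inner_commute)
    qed
    then show ?thesis using part1[OF n] by blast
  qed
  have np: "mat_nonpos A"
    unfolding mat_nonpos_def bil_mat A_def bil_top using key by blast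
  have symA: "A$i$j = A$j$i" for i j
    using sym by (simp add: A_def xi_top_def sym_array_def)
  have "X$b = xi$b *\<^sub>R A" for b
  proof -
    have "X$b - xi$b *\<^sub>R A = 0"
    proof (rule polar)
      show "(X$b - xi$b *\<^sub>R A)$i$j = (X$b - xi$b *\<^sub>R A)$j$i" for i j
      proof -
        have h1: "X$b$i$j = X$b$j$i" using sym unfolding sym_array_def by blast
        show ?thesis using h1 symA[of i j] by simp
      qed
      show "bil (X$b - xi$b *\<^sub>R A) w w = 0" for w
      proof -
        have "qv X w $ b = (xi \<bullet> qv X w) * xi$b"
          using arg_cong[where f="\<lambda>u. u$b", OF conjunct1[OF key[of w]]] by simp
        moreover have "bil (X$b) w w = qv X w $ b" by (simp add: qv_def)
        moreover have "bil A w w = xi \<bullet> qv X w" unfolding A_def by (rule bil_top)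
        ultimately show ?thesis by (simp add: bil_diff bil_scale)
      qed
    qed
    then show ?thesis by simp
  qed
  then have "X = otimes_vm xi A" by (simp add: vec_eq_iff otimes_vm_def)
  then show ?thesis using np unfolding A_def by blast
qed

lemma E1_imp_T:
  fixes xi :: "real^'N" and X :: "real^'n^'n^'N"
  assumes "X = otimes_vm xi A" "mat_nonpos A"
  shows "tensor_nonpos (vee4 xi X)"
  unfolding tensor_nonpos_def
proof
  fix P :: "real^'n^'N"
  define p where "p = (\<chi> i. \<Sum>a\<in>UNIV. xi$a * P$a$i)"
  have "p \<bullet> (A *v p) \<le> 0" using assms(2) unfolding mat_nonpos_def by blast
  then have "bil A p p \<le> 0" by (simp only: bil_mat)
  then show "(\<Sum>a\<in>UNIV. \<Sum>i\<in>UNIV. \<Sum>b\<in>UNIV. \<Sum>j\<in>UNIV. vee4 xi X a i b j * P$a$i * P$b$j) \<le> 0"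
    unfolding assms(1) tensor_sum_otimes p_def .
qed

lemma T_imp_O:
  assumes "tensor_nonpos T"
  shows "tensor_nonpos_otimes T"
  unfolding tensor_nonpos_otimes_def
proof (intro allI)
  fix eta w
  show "(\<Sum>a\<in>UNIV. \<Sum>i\<in>UNIV. \<Sum>b\<in>UNIV. \<Sum>j\<in>UNIV. T a i b j * eta$a * w$i * eta$b * w$j) \<le> 0"
    using assms[unfolded tensor_nonpos_def, rule_format, of "\<chi> a i. eta$a * w$i"]
    by (simp add: mult.assoc)
qed

lemma part2:
  fixes xi :: "real^'N" and X :: "real^'n^'n^'N"
  assumes n: "norm xi = 1" and sym: "sym_array X"
  shows "(tensor_nonpos_otimes (vee4 xi X) \<longleftrightarrow>
          (X = otimes_vm xi (xi_top xi X) \<and> mat_nonpos (xi_top xi X)))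
     \<and> ((X = otimes_vm xi (xi_top xi X) \<and> mat_nonpos (xi_top xi X)) \<longleftrightarrow>
          (xi_perp_arr xi X = 0 \<and> mat_nonpos (xi_top xi X)))
     \<and> ((xi_perp_arr xi X = 0 \<and> mat_nonpos (xi_top xi X)) \<longleftrightarrow>
          tensor_nonpos (vee4 xi X))"
proof -
  have e: "xi_perp_arr xi X = 0 \<longleftrightarrow> X = otimes_vm xi (xi_top xi X)"
    by (simp add: perp_arr_apply)
  have o1: "tensor_nonpos_otimes (vee4 xi X) \<Longrightarrow> X = otimes_vm xi (xi_top xi X) \<and> mat_nonpos (xi_top xi X)"
    by (rule O_imp_E1[OF n sym])
  have t1: "X = otimes_vm xi (xi_top xi X) \<and> mat_nonpos (xi_top xi X) \<Longrightarrow> tensor_nonpos (vee4 xi X)"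
    using E1_imp_T[of X xi "xi_top xi X"] by (simp only: conj_imp_eq_imp_imp)
  have t2: "tensor_nonpos (vee4 xi X) \<Longrightarrow> tensor_nonpos_otimes (vee4 xi X)"
    by (rule T_imp_O)
  show ?thesis
  proof (rule conjI[OF iffI conjI[OF iffI iffI]])
    show "X = otimes_vm xi (xi_top xi X) \<and> mat_nonpos (xi_top xi X)" if "tensor_nonpos_otimes (vee4 xi X)"
      using that by (rule o1)
    show "tensor_nonpos_otimes (vee4 xi X)" if "X = otimes_vm xi (xi_top xi X) \<and> mat_nonpos (xi_top xi X)"
      using t2 t1 that by blast
    show "xi_perp_arr xi X = 0 \<and> mat_nonpos (xi_top xi X)" if "X = otimes_vm xi (xi_top xi X) \<and> mat_nonpos (xi_top xi X)"
      using that e by (simp only:)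
    show "X = otimes_vm xi (xi_top xi X) \<and> mat_nonpos (xi_top xi X)" if "xi_perp_arr xi X = 0 \<and> mat_nonpos (xi_top xi X)"
      using that e by (simp only:)
    show "tensor_nonpos (vee4 xi X)" if "xi_perp_arr xi X = 0 \<and> mat_nonpos (xi_top xi X)"
      using that e t1 by (simp only:)
    show "xi_perp_arr xi X = 0 \<and> mat_nonpos (xi_top xi X)" if "tensor_nonpos (vee4 xi X)"
      using that e o1 t2 by (simp only:)
  qed
qed


lemma cpos_le: "(c::real) > 0 \<Longrightarrow> c * s \<le> 0 \<longleftrightarrow> s \<le> 0"
  by (simp add: mult_le_0_iff)

lemma scale_tn:
  fixes T :: "'N::finite \<Rightarrow> 'n::finite \<Rightarrow> 'N \<Rightarrow> 'n \<Rightarrow> real"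
  assumes c: "(c::real) > 0"
  shows "tensor_nonpos (\<lambda>a i b j. c * T a i b j) \<longleftrightarrow> tensor_nonpos T"
proof -
  have "(\<Sum>a\<in>UNIV. \<Sum>i\<in>UNIV. \<Sum>b\<in>UNIV. \<Sum>j\<in>UNIV. c * T a i b j * P$a$i * P$b$j)
    = c * (\<Sum>a\<in>UNIV. \<Sum>i\<in>UNIV. \<Sum>b\<in>UNIV. \<Sum>j\<in>UNIV. T a i b j * P$a$i * P$b$j)" for P :: "real^'n^'N"
    by (simp add: sum_distrib_left mult.assoc)
  then show ?thesis using cpos_le[OF c] by (simp add: tensor_nonpos_def)
qed

lemma scale_tno:
  fixes T :: "'N::finite \<Rightarrow> 'n::finite \<Rightarrow> 'N \<Rightarrow> 'n \<Rightarrow> real"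
  assumes c: "(c::real) > 0"
  shows "tensor_nonpos_otimes (\<lambda>a i b j. c * T a i b j) \<longleftrightarrow> tensor_nonpos_otimes T"
proof -
  have "(\<Sum>a\<in>UNIV. \<Sum>i\<in>UNIV. \<Sum>b\<in>UNIV. \<Sum>j\<in>UNIV. c * T a i b j * eta$a * w$i * eta$b * w$j)
    = c * (\<Sum>a\<in>UNIV. \<Sum>i\<in>UNIV. \<Sum>b\<in>UNIV. \<Sum>j\<in>UNIV. T a i b j * eta$a * w$i * eta$b * w$j)"
    for eta :: "real^'N" and w :: "real^'n"
    by (simp add: sum_distrib_left mult.assoc)
  then show ?thesis using cpos_le[OF c] by (simp add: tensor_nonpos_otimes_def)
qed

lemma part3:
  fixes eta :: "real^'N" and Y :: "real^'n^'n^'N"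
  assumes sym: "sym_array Y"
  shows "tensor_nonpos_otimes (vee4 eta Y) \<longleftrightarrow> tensor_nonpos (vee4 eta Y)"
proof (cases "eta = 0")
  case True
  then show ?thesis by (simp add: tensor_nonpos_otimes_def tensor_nonpos_def vee4_def)
next
  case False
  define c where "c = norm eta"
  have c: "c > 0" using False by (simp add: c_def)
  define xi where "xi = (1/c) *\<^sub>R eta"
  have n: "norm xi = 1" using c by (simp add: xi_def c_def)
  have eq: "vee4 eta Y = (\<lambda>a i b j. c * vee4 xi Y a i b j)"
    using c by (simp add: fun_eq_iff vee4_def xi_def field_simps)
  show ?thesis unfolding eq scale_tn[OF c] scale_tno[OF c]
    using part2[OF n sym] T_imp_O by blast
qed

theorem proposition14:
  fixes xi :: "real^'N"
  assumes "norm xi = 1"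
  shows
   "(\<forall>v :: real^'N.
       (mat_nonpos (vee xi v) \<longleftrightarrow> (v = (xi \<bullet> v) *\<^sub>R xi \<and> xi \<bullet> v \<le> 0))
     \<and> ((v = (xi \<bullet> v) *\<^sub>R xi \<and> xi \<bullet> v \<le> 0) \<longleftrightarrow> (xi_perp_mat xi *v v = 0 \<and> xi \<bullet> v \<le> 0))
     \<and> ((xi_perp_mat xi *v v = 0 \<and> xi \<bullet> v \<le> 0) \<longleftrightarrow> v = - (norm v *\<^sub>R xi)))
    \<and> (\<forall>X :: real^'n^'n^'N. sym_array X \<longrightarrow>
       (tensor_nonpos_otimes (vee4 xi X) \<longleftrightarrow>
          (X = otimes_vm xi (xi_top xi X) \<and> mat_nonpos (xi_top xi X)))
     \<and> ((X = otimes_vm xi (xi_top xi X) \<and> mat_nonpos (xi_top xi X)) \<longleftrightarrow>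
          (xi_perp_arr xi X = 0 \<and> mat_nonpos (xi_top xi X)))
     \<and> ((xi_perp_arr xi X = 0 \<and> mat_nonpos (xi_top xi X)) \<longleftrightarrow>
          tensor_nonpos (vee4 xi X)))
    \<and> (\<forall>(eta :: real^'N) (Y :: real^'n^'n^'N). sym_array Y \<longrightarrow>
       (tensor_nonpos_otimes (vee4 eta Y) \<longleftrightarrow> tensor_nonpos (vee4 eta Y)))"
  proof -
  have xx: "xi \<bullet> xi = 1" using assms by (simp add: norm_eq_1)
  have i3: "(xi_perp_mat xi *v v = 0 \<and> xi \<bullet> v \<le> 0) \<longleftrightarrow> v = - (norm v *\<^sub>R xi)" for v
  proof
    assume A: "xi_perp_mat xi *v v = 0 \<and> xi \<bullet> v \<le> 0"
    then have v: "v = (xi \<bullet> v) *\<^sub>R xi" by (simp add: perp_mat_apply)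
    have "norm v = \<bar>xi \<bullet> v\<bar>" using assms by (subst v) simp
    then have "norm v = - (xi \<bullet> v)" using A by simp
    then show "v = - (norm v *\<^sub>R xi)" using v by simp
  next
    assume v: "v = - (norm v *\<^sub>R xi)"
    have "xi \<bullet> v = - norm v" using xx by (subst v) (simp add: inner_minus_right)
    then show "xi_perp_mat xi *v v = 0 \<and> xi \<bullet> v \<le> 0"
      using v by (simp add: perp_mat_apply)
  qed
  have i2: "((v = (xi \<bullet> v) *\<^sub>R xi \<and> xi \<bullet> v \<le> 0) \<longleftrightarrow> (xi_perp_mat xi *v v = 0 \<and> xi \<bullet> v \<le> 0))" for v
    unfolding perp_mat_apply by simp
  show ?thesis
    using part1[OF assms] i2 i3 part2[OF assms] part3 by blast
qed

end
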